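(* Let $d\ge1$, $x_1<x_2$, $x_0\in[x_1,x_2]$, let $p,q,r_1,\dots,r_d$ be functions on $[x_1,x_2]$, $Ly=(py')'+qy$, and let $u_0$ be a nonvanishing function on $[x_1,x_2]$ with $Lu_0=0$. Then for every $\mathbf n\in\mathbb Z_{\ge0}^d$, $$L\big(u_0X^{(2\mathbf n+\frac1d\mathbf 1)}\big)=(2|\mathbf n|+1)(2|\mathbf n|)\,u_0\sum_{i=1}^d r_i\,X^{(2\mathbf n-2\delta_i+\frac1d\mathbf 1)} .$$
   Context: Notation: $\int f$ denotes $x\mapsto\int_{x_0}^x f(s)\,ds$; $|\mathbf j|=j_1+\cdots+j_d$; $\delta_i$ is the $i$-th standard basis vector; $\mathbf 1=(1,\dots,1)$. Formal powers $X$: indexed by $\mathbf j=\mathbf m+\frac1d\mathbf 1$ with $\mathbf m\in\mathbb Z^d$, so $|\mathbf j|=|\mathbf m|+1$. Call $\mathbf j$ admissible if at most one $m_i$ is odd. Set $X^{(\frac1d\mathbf 1-\delta_i)}\equiv\frac1d$ for $i=1,\dots,d$; $X^{(\mathbf m+\frac1d\mathbf 1)}\equiv0$ if some $m_i<0$ and $\mathbf m\notin\{-\delta_1,\dots,-\delta_d\}$. For admissible $\mathbf j$ with $\mathbf m\ge0$: if $|\mathbf j|$ is even (exactly one $m_i$ odd), $X^{(\mathbf j)}=|\mathbf j|\int r_iu_0^2\,X^{(\mathbf j-\delta_i)}$ for that $i$; if $|\mathbf j|$ is odd, $X^{(\mathbf j)}=|\mathbf j|\int\frac{1}{pu_0^2}\sum_{i=1}^dX^{(\mathbf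 j-\delta_i)}$. *)

theory Defs
  imports "HOL-Analysis.Analysis"
begin

definition oint :: "real \<Rightarrow> (real \<Rightarrow> real) \<Rightarrow> real \<Rightarrow> real" where
  "oint x0 f x = (if x0 \<le> x then integral {x0..x} f else - integral {x..x0} f)"

text \<open>Sturm-Liouville operator: L_eq a b p q y f means  (p y')' + q y = f  on [a,b]
  (one-sided derivatives at the endpoints).\<close>
definition L_eq :: "real \<Rightarrow> real \<Rightarrow> (real \<Rightarrow> real) \<Rightarrow> (real \<Rightarrow> real) \<Rightarrow> (real \<Rightarrow> real)
    \<Rightarrow> (real \<Rightarrow> real) \<Rightarrow> bool" where
  "L_eq a b p q y f \<longleftrightarrow> (\<exists>y'.
      (\<forall>x\<in>{a..b}. (y has_real_derivative y' x) (at x within {a..b})) \<and>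
      (\<forall>x\<in>{a..b}. ((\<lambda>t. p t * y' t) has_real_derivative (f x - q x * y x)) (at x within {a..b})))"

text \<open>Index m :: int list of length d (0-based coordinates); j = m + (1/d) 1.\<close>
definition admissible :: "int list \<Rightarrow> bool" where
  "admissible m \<longleftrightarrow> card {i. i < length m \<and> odd (m ! i)} \<le> 1"

definition minus_delta :: "int list \<Rightarrow> nat \<Rightarrow> int list" where
  "minus_delta m i = m[i := m ! i - 1]"

lemma sum_list_update_minus1:
  "i < length m \<Longrightarrow> sum_list (m[i := m ! i - 1]) = sum_list m - (1::int)"
  by (induction m arbitrary: i) (auto split: nat.splits)

function Xf :: "real \<Rightarrow> (real \<Rightarrow> real) \<Rightarrow> (real \<Rightarrow> real) \<Rightarrow> (nat \<Rightarrow> real \<Rightarrow> real)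
    \<Rightarrow> int list \<Rightarrow> real \<Rightarrow> real" where
  "Xf x0 p u0 r m =
    (if (\<exists>i<length m. m = (replicate (length m) 0)[i := -1]) then (\<lambda>_. 1 / real (length m))
     else if (\<exists>i<length m. m ! i < 0) then (\<lambda>_. 0)
     else if \<not> admissible m then (\<lambda>_. 0)
     else if odd (sum_list m) then
       (\<lambda>x. real_of_int (sum_list m + 1) *
          (\<Sum>i<length m. if odd (m ! i) then
             oint x0 (\<lambda>s. r i s * (u0 s)\<^sup>2 * Xf x0 p u0 r (minus_delta m i) s) x else 0))
     else
       (\<lambda>x. real_of_int (sum_list m + 1) *
          oint x0 (\<lambda>s. 1 / (p s * (u0 s)\<^sup>2) * (\<Sum>i<length m. Xf x0 p u0 r (minus_delta m i) s)) x))"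
  by pat_completeness auto
termination
proof (relation "Wellfounded.measure (\<lambda>(x0, p, u0, r, m). nat (sum_list m + 1))")
  have key: "nat (sum_list (minus_delta m i) + 1) < nat (sum_list m + 1)"
    if "i < length m" "\<not> (\<exists>i<length m. m ! i < 0)" for m :: "int list" and i
  proof -
    have "sum_list (minus_delta m i) = sum_list m - 1"
      using that(1) by (simp add: minus_delta_def sum_list_update_minus1)
    moreover have "sum_list m \<ge> 0" using that(2)
      by (intro sum_list_nonneg) (metis in_set_conv_nth not_less)
    ultimately show ?thesis by simp
  qed
  show "wf (Wellfounded.measure (\<lambda>(x0, p, u0, r, m). nat (sum_list m + 1)))" by simp
  show "\<And>x0 p u0 r m x i s. \<not> (\<exists>i<length m. m = (replicate (length m) 0)[i := - 1]) \<Longrightarrow>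
       \<not> (\<exists>i<length m. m ! i < 0) \<Longrightarrow> \<not> \<not> admissible m \<Longrightarrow> odd (sum_list m) \<Longrightarrow>
       i \<in> {..<length m} \<Longrightarrow> odd (m ! i) \<Longrightarrow>
       ((x0, p, u0, r, minus_delta m i), x0, p, u0, r, m) \<in> Wellfounded.measure (\<lambda>(x0, p, u0, r, m). nat (sum_list m + 1))"
    using key by auto
  show "\<And>x0 p u0 r m x s i. \<not> (\<exists>i<length m. m = (replicate (length m) 0)[i := - 1]) \<Longrightarrow>
       \<not> (\<exists>i<length m. m ! i < 0) \<Longrightarrow> \<not> \<not> admissible m \<Longrightarrow> \<not> odd (sum_list m) \<Longrightarrow>
       i \<in> {..<length m} \<Longrightarrow>
       ((x0, p, u0, r, minus_delta m i), x0, p, u0, r, m) \<in> Wellfounded.measure (\<lambda>(x0, p, u0, r, m). nat (sum_list m + 1))"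
    using key by auto
qed

end

theory Submission imports Defs begin

declare Xf.simps[simp del]

lemma deriv_transform_on:
  assumes "(f has_field_derivative D) (at x within S)" "x \<in> S" "\<And>y. y \<in> S \<Longrightarrow> g y = f y"
  shows "(g has_field_derivative D) (at x within S)"
  using has_field_derivative_transform_within[OF assms(1) zero_less_one assms(2)] assms(3) by metis

lemma oint_alt:
  assumes "continuous_on {a..b} f" "x0 \<in> {a..b}" "x \<in> {a..b}"
  shows "oint x0 f x = integral {a..x} f - integral {a..x0} f"
proof (cases "x0 \<le> x")
  case True
  have "f integrable_on {a..x}"
    by (rule integrable_continuous_interval, rule continuous_on_subset[OF assms(1)]) (use assms in auto)
  moreover have "a \<le> x0" using assms by auto
  ultimately have "integral {a..x0} f + integral {x0..x} f = integral {a..x} f"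
    using Henstock_Kurzweil_Integration.integral_combine[where a=a and c=x0 and b=x and f=f] True by blast
  thus ?thesis using True by (simp add: oint_def)
next
  case False
  have "f integrable_on {a..x0}"
    by (rule integrable_continuous_interval, rule continuous_on_subset[OF assms(1)]) (use assms in auto)
  moreover have "a \<le> x" using assms by auto
  ultimately have "integral {a..x} f + integral {x..x0} f = integral {a..x0} f"
    using Henstock_Kurzweil_Integration.integral_combine[where a=a and c=x and b=x0 and f=f] False by auto
  thus ?thesis using False by (simp add: oint_def)
qed

lemma oint_deriv:
  assumes "continuous_on {a..b} f" "x0 \<in> {a..b}" "x \<in> {a..b}"
  shows "(oint x0 f has_real_derivative f x) (at x within {a..b})"
proof -
  have *: "((\<lambda>u. integral {a..u} f - integral {a..x0} f) has_real_derivative f x) (at x within {a..b})"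
    using DERIV_diff[OF integral_has_real_derivative[OF assms(1,3)] DERIV_const] by simp
  show ?thesis
    by (rule deriv_transform_on[OF *]) (use assms in \<open>auto simp: oint_alt[OF assms(1,2)]\<close>)
qed

lemma oint_cont:
  assumes "continuous_on {a..b} f" "x0 \<in> {a..b}"
  shows "continuous_on {a..b} (oint x0 f)"
  by (rule DERIV_continuous_on, rule oint_deriv[OF assms])

lemma Xf_cont:
  assumes "continuous_on {a..b} p" "continuous_on {a..b} u0"
    "\<forall>x\<in>{a..b}. p x \<noteq> 0" "\<forall>x\<in>{a..b}. u0 x \<noteq> 0" "x0 \<in> {a..b}"
    "\<forall>i<length m. continuous_on {a..b} (r i)"
  shows "continuous_on {a..b} (Xf x0 p u0 r m)"
  using assms
proof (induction x0 p u0 r m rule: Xf.induct)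
  case (1 x0 p u0 r m)
  have lm: "length (minus_delta m i) = length m" for i by (simp add: minus_delta_def)
  show ?case
  proof (cases "\<exists>i<length m. m = (replicate (length m) 0)[i := - 1]")
    case True thus ?thesis by (subst Xf.simps) simp
  next
    case c1: False
    show ?thesis
    proof (cases "\<exists>i<length m. m ! i < 0")
      case True thus ?thesis using c1 by (subst Xf.simps) simp
    next
      case c2: False
      show ?thesis
      proof (cases "admissible m")
        case False thus ?thesis using c1 c2 by (subst Xf.simps) simp
      next
        case c3: True
        show ?thesis
        proof (cases "odd (sum_list m)")
          case o: True
          have "continuous_on {a..b} (\<lambda>x. real_of_int (sum_list m + 1) *
              (\<Sum>i<length m. if odd (m ! i) then
                 oint x0 (\<lambda>s. r i s * (u0 s)\<^sup>2 * Xf x0 p u0 r (minus_delta m i) s) x else 0))"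
          proof (intro continuous_on_mult continuous_on_const continuous_on_sum ballI)
            fix i assume i: "i \<in> {..<length m}"
            show "continuous_on {a..b} (\<lambda>x. if odd (m ! i) then
                 oint x0 (\<lambda>s. r i s * (u0 s)\<^sup>2 * Xf x0 p u0 r (minus_delta m i) s) x else 0)"
            proof (cases "odd (m ! i)")
              case True
              have "continuous_on {a..b} (Xf x0 p u0 r (minus_delta m i))"
                using 1(1)[OF c1 c2 _ o i True] c3 1(3-) lm by auto
              hence "continuous_on {a..b} (oint x0 (\<lambda>s. r i s * (u0 s)\<^sup>2 * Xf x0 p u0 r (minus_delta m i) s))"
                using 1(3-) i by (intro oint_cont continuous_on_mult continuous_on_power) auto
              thus ?thesis using True by simp
            qed simp
          qed
          thus ?thesis using c1 c2 c3 o by (subst Xf.simps) simp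
        next
          case o: False
          have "continuous_on {a..b} (\<lambda>s. 1 / (p s * (u0 s)\<^sup>2) * (\<Sum>i<length m. Xf x0 p u0 r (minus_delta m i) s))"
            using 1(2)[OF c1 c2 _ o] c3 1(3-) lm
            by (intro continuous_on_mult continuous_on_divide continuous_on_const continuous_on_power continuous_on_sum) auto
          hence "continuous_on {a..b} (oint x0 (\<lambda>s. 1 / (p s * (u0 s)\<^sup>2) * (\<Sum>i<length m. Xf x0 p u0 r (minus_delta m i) s)))"
            using 1(3-) by (intro oint_cont) auto
          hence "continuous_on {a..b} (\<lambda>x. real_of_int (sum_list m + 1) *
              oint x0 (\<lambda>s. 1 / (p s * (u0 s)\<^sup>2) * (\<Sum>i<length m. Xf x0 p u0 r (minus_delta m i) s)) x)"
            by (rule continuous_on_mult[OF continuous_on_const])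
          thus ?thesis using c1 c2 c3 o by (subst Xf.simps) simp
        qed
      qed
    qed
  qed
qed


lemma sum_map2: "sum_list (map (\<lambda>k. 2 * int k) n) = 2 * int (sum_list n)"
  by (induction n) auto

lemma repl_nth: "i < d \<Longrightarrow> (replicate d (0::int))[j := -1] ! i \<in> {0, -1}"
  by (cases "i = j") auto

lemma Xf_main:
  fixes n :: "nat list"
  defines "m \<equiv> map (\<lambda>k. 2 * int k) n"
  shows "Xf x0 p u0 r m = (\<lambda>x. real (2 * sum_list n + 1) *
     oint x0 (\<lambda>s. 1 / (p s * (u0 s)\<^sup>2) * (\<Sum>i<length n. Xf x0 p u0 r (minus_delta m i) s)) x)"
proof -
  have c1: "\<not> (\<exists>i<length m. m = (replicate (length m) 0)[i := - 1])"
  proof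
    assume "\<exists>i<length m. m = (replicate (length m) 0)[i := - 1]"
    then obtain i where i: "i < length m" "m = (replicate (length m) 0)[i := - 1]" by blast
    hence "m ! i = -1" by (metis length_replicate nth_list_update_eq)
    thus False using i(1) unfolding m_def by simp
  qed
  have c2: "\<not> (\<exists>i<length m. m ! i < 0)" unfolding m_def by simp
  have e0: "{i. i < length m \<and> odd (m ! i)} = {}" unfolding m_def by auto
  have c3: "admissible m" unfolding admissible_def e0 by simp
  have c4: "\<not> odd (sum_list m)" unfolding m_def sum_map2 by simp
  have lm: "length m = length n" unfolding m_def by simp
  have e: "real_of_int (sum_list m + 1) = real (2 * sum_list n + 1)"
    unfolding m_def sum_map2 by simp
  show ?thesis
    by (subst Xf.simps) (simp only: c1 c2 c3 c4 e if_False if_True not_not not_True_eq_False not_False_eq_True, simp only: lm)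
qed

lemma Xf_md_pos:
  fixes n :: "nat list"
  defines "m \<equiv> map (\<lambda>k. 2 * int k) n"
  assumes i: "i < length n" and pos: "n ! i > 0"
  shows "Xf x0 p u0 r (minus_delta m i) = (\<lambda>x. real (2 * sum_list n) *
     oint x0 (\<lambda>s. r i s * (u0 s)\<^sup>2 * Xf x0 p u0 r (m[i := 2 * int (n ! i) - 2]) s) x)"
proof -
  define md where "md = minus_delta m i"
  have md: "md = m[i := 2 * int (n ! i) - 1]" unfolding md_def minus_delta_def m_def using i by simp
  have lm: "length md = length n" unfolding md m_def by simp
  have mdk: "md ! k = (if k = i then 2 * int (n ! i) - 1 else 2 * int (n ! k))" if "k < length n" for k
    using that i unfolding md m_def by (simp add: nth_list_update)
  have c1: "\<not> (\<exists>j<length md. md = (replicate (length md) 0)[j := - 1])"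
  proof
    assume "\<exists>j<length md. md = (replicate (length md) 0)[j := - 1]"
    then obtain j where "md = (replicate (length md) 0)[j := - 1]" by blast
    hence "md ! i \<in> {0, -1}" using repl_nth[of i "length md" j] i lm by simp
    thus False using mdk[OF i] pos by auto
  qed
  have c2: "\<not> (\<exists>k<length md. md ! k < 0)" using mdk pos lm by auto
  have oddk: "odd (md ! k) \<longleftrightarrow> k = i" if "k < length n" for k
    using mdk[OF that] by auto
  have set: "{k. k < length md \<and> odd (md ! k)} = {i}" using oddk lm i by auto
  have c3: "admissible md" unfolding admissible_def set by simp
  have sm: "sum_list md = 2 * int (sum_list n) - 1"
    unfolding md_def minus_delta_def using i sum_list_update_minus1[of i m]
    by (simp add: m_def sum_map2)
  have c4: "odd (sum_list md)" unfolding sm by simp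
  have e: "real_of_int (sum_list md + 1) = real (2 * sum_list n)"
    unfolding sm by simp
  have mdd: "minus_delta md i = m[i := 2 * int (n ! i) - 2]"
    unfolding md minus_delta_def using i by (simp add: m_def)
  have sumeq: "(\<Sum>k<length md. if odd (md ! k) then f k else 0) = f i" for f :: "nat \<Rightarrow> real"
  proof -
    have "(\<Sum>k<length md. if odd (md ! k) then f k else 0) = (\<Sum>k<length md. if k = i then f k else 0)"
      by (rule sum.cong) (use oddk lm in auto)
    also have "\<dots> = f i" using i lm by simp
    finally show ?thesis .
  qed
  have "Xf x0 p u0 r md = (\<lambda>x. real_of_int (sum_list md + 1) *
          (\<Sum>k<length md. if odd (md ! k) then
             oint x0 (\<lambda>s. r k s * (u0 s)\<^sup>2 * Xf x0 p u0 r (minus_delta md k) s) x else 0))"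
    by (subst Xf.simps) (simp only: c1 c2 c3 c4 if_False if_True not_not not_True_eq_False not_False_eq_True)
  also have "\<dots> = (\<lambda>x. real (2 * sum_list n) *
     oint x0 (\<lambda>s. r i s * (u0 s)\<^sup>2 * Xf x0 p u0 r (m[i := 2 * int (n ! i) - 2]) s) x)"
    by (simp only: sumeq e mdd)
  finally show ?thesis unfolding md_def .
qed

lemma Xf_md_zero:
  fixes n :: "nat list"
  defines "m \<equiv> map (\<lambda>k. 2 * int k) n"
  assumes i: "i < length n" and z: "n ! i = 0"
  shows "\<exists>c. Xf x0 p u0 r (minus_delta m i) = (\<lambda>_. c)"
proof -
  define md where "md = minus_delta m i"
  have md: "md = m[i := -1]" unfolding md_def minus_delta_def m_def using i z by simp
  have lm: "length md = length n" unfolding md m_def by simp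
  have neg: "\<exists>k<length md. md ! k < 0" using i lm unfolding md by (intro exI[of _ i]) simp
  show ?thesis unfolding md_def[symmetric]
    by (subst Xf.simps) (use neg in auto)
qed

lemma Xf_m2_zero:
  fixes n :: "nat list"
  defines "m \<equiv> map (\<lambda>k. 2 * int k) n"
  assumes i: "i < length n" and z: "n ! i = 0"
  shows "Xf x0 p u0 r (m[i := 2 * int (n ! i) - 2]) = (\<lambda>_. 0)"
proof -
  define md where "md = m[i := 2 * int (n ! i) - 2]"
  have lm: "length md = length n" unfolding md_def m_def by simp
  have mdi: "md ! i = -2" unfolding md_def m_def using i z by simp
  have c1: "\<not> (\<exists>j<length md. md = (replicate (length md) 0)[j := - 1])"
  proof
    assume "\<exists>j<length md. md = (replicate (length md) 0)[j := - 1]"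
    then obtain j where "md = (replicate (length md) 0)[j := - 1]" by blast
    hence "md ! i \<in> {0, -1}" using repl_nth[of i "length md" j] i lm by simp
    thus False using mdi by auto
  qed
  have neg: "\<exists>k<length md. md ! k < 0" using i lm mdi by (intro exI[of _ i]) simp
  show ?thesis unfolding md_def[symmetric]
    by (subst Xf.simps) (simp only: c1 neg if_False if_True simp_thms)
qed

theorem mainTheorem3:
  fixes x1 x2 x0 :: real and p q u0 :: "real \<Rightarrow> real" and r :: "nat \<Rightarrow> real \<Rightarrow> real"
    and n :: "nat list"
  assumes "length n \<ge> 1" and "x1 < x2" and "x0 \<in> {x1..x2}"
    and "continuous_on {x1..x2} p" and "continuous_on {x1..x2} q"
    and "\<forall>i<length n. continuous_on {x1..x2} (r i)"
    and "\<forall>x\<in>{x1..x2}. p x \<noteq> 0"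
    and "\<forall>x\<in>{x1..x2}. u0 x \<noteq> 0"
    and "L_eq x1 x2 p q u0 (\<lambda>_. 0)"
  shows "L_eq x1 x2 p q
           (\<lambda>x. u0 x * Xf x0 p u0 r (map (\<lambda>k. 2 * int k) n) x)
           (\<lambda>x. real (2 * sum_list n + 1) * real (2 * sum_list n) * u0 x *
                (\<Sum>i<length n. r i x *
                   Xf x0 p u0 r ((map (\<lambda>k. 2 * int k) n)[i := 2 * int (n ! i) - 2]) x))"
proof -
  let ?I = "{x1..x2}"
  define m where "m = map (\<lambda>k. 2 * int k) n"
  define N where "N = sum_list n"
  define c where "c = real (2 * N + 1)"
  define S where "S = (\<lambda>s. \<Sum>i<length n. Xf x0 p u0 r (minus_delta m i) s)"
  define g where "g = (\<lambda>s. 1 / (p s * (u0 s)\<^sup>2) * S s)"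
  define T where "T = (\<lambda>i. Xf x0 p u0 r (m[i := 2 * int (n ! i) - 2]))"
  define X where "X = Xf x0 p u0 r m"
  obtain u0' where du: "\<forall>x\<in>?I. (u0 has_real_derivative u0' x) (at x within ?I)"
    and dpu: "\<forall>x\<in>?I. ((\<lambda>t. p t * u0' t) has_real_derivative (0 - q x * u0 x)) (at x within ?I)"
    using assms(9)unfolding L_eq_def by blast
  have u0c: "continuous_on ?I u0" by (rule DERIV_continuous_on) (use du in blast)
  have pc: "continuous_on ?I p" using assms(4) .
  have pnz: "\<forall>x\<in>?I. p x \<noteq> 0" and unz: "\<forall>x\<in>?I. u0 x \<noteq> 0" using assms(7,8) by auto
  have x0I: "x0 \<in> ?I" using assms(3) .
  have rc: "\<forall>i<length n. continuous_on ?I (r i)" using assms(6) .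
  have Xc: "continuous_on ?I (Xf x0 p u0 r k)" if "length k = length n" for k
    using Xf_cont[OF pc u0c pnz unz x0I] rc that by simp
  have lmd: "length (minus_delta m i) = length n" for i by (simp add: minus_delta_def m_def)
  have Sc: "continuous_on ?I S" unfolding S_def
    by (intro continuous_on_sum Xc lmd)
  have gc: "continuous_on ?I g" unfolding g_def
    using pnz unz by (intro continuous_on_mult continuous_on_divide continuous_on_const continuous_on_power Sc pc u0c) auto
  have XE: "X = (\<lambda>x. c * oint x0 g x)" unfolding X_def c_def g_def S_def m_def N_def by (rule Xf_main)
  have dX: "(X has_real_derivative c * g x) (at x within ?I)" if x: "x \<in> ?I" for x
    unfolding XE by (rule DERIV_cmult[OF oint_deriv[OF gc assms(3) x]])
  have dMD: "(Xf x0 p u0 r (minus_delta m i) has_real_derivative real (2 * N) * (r i x * (u0 x)\<^sup>2 * T i x)) (at x within ?I)"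
    if x: "x \<in> ?I" and i: "i < length n" for x i
  proof (cases "n ! i = 0")
    case True
    obtain c' where "Xf x0 p u0 r (minus_delta m i) = (\<lambda>_. c')" using Xf_md_zero[OF i True] unfolding m_def by blast
    moreover have "T i = (\<lambda>_. 0)" unfolding T_def m_def by (rule Xf_m2_zero[OF i True])
    ultimately show ?thesis by simp
  next
    case False
    have TC: "continuous_on ?I (T i)" unfolding T_def by (rule Xc) (simp add: m_def)
    have cc: "continuous_on ?I (\<lambda>s. r i s * (u0 s)\<^sup>2 * T i s)"
      using rc i by (intro continuous_on_mult continuous_on_power u0c TC) auto
    have E: "Xf x0 p u0 r (minus_delta m i) = (\<lambda>x. real (2 * N) * oint x0 (\<lambda>s. r i s * (u0 s)\<^sup>2 * T i s) x)"
      unfolding T_def m_def N_def using Xf_md_pos[OF i] False by simp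
    show ?thesis unfolding E
      by (rule DERIV_cmult[OF oint_deriv[OF cc assms(3) x]])
  qed
  have dS: "(S has_real_derivative (\<Sum>i<length n. real (2 * N) * (r i x * (u0 x)\<^sup>2 * T i x))) (at x within ?I)"
    if x: "x \<in> ?I" for x
    unfolding S_def by (rule DERIV_sum) (use dMD[OF x] in auto)
  define y' where "y' = (\<lambda>x. u0' x * X x + u0 x * (c * g x))"
  show ?thesis
   unfolding m_def[symmetric] N_def[symmetric] X_def[symmetric]
  proof (unfold L_eq_def, intro exI[of _ y'] conjI ballI)
    fix x assume x: "x \<in> ?I"
    show "((\<lambda>x. u0 x * X x) has_real_derivative y' x) (at x within ?I)"
      using DERIV_mult[OF du[rule_format, OF x] dX[OF x]] by (rule DERIV_cong) (simp add: y'_def algebra_simps)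
    have eq: "p t * y' t = (p t * u0' t) * X t + c * (S t / u0 t)" if t: "t \<in> ?I" for t
      using pnz unz t unfolding y'_def g_def by (auto simp: field_simps power2_eq_square)
    have D: "((\<lambda>t. (p t * u0' t) * X t + c * (S t / u0 t)) has_real_derivative
        (0 - q x * u0 x) * X x + (c * g x) * (p x * u0' x) +
        c * (((\<Sum>i<length n. real (2 * N) * (r i x * (u0 x)\<^sup>2 * T i x)) * u0 x - S x * u0' x) / (u0 x * u0 x)))
        (at x within ?I)"
      using unz x by (intro DERIV_add DERIV_mult DERIV_cmult DERIV_divide dpu[rule_format, OF x] dX[OF x] dS[OF x] du[rule_format, OF x]) auto
    have DS: "(\<Sum>i<length n. real (2 * N) * (r i x * (u0 x)\<^sup>2 * T i x)) = real (2 * N) * (u0 x)\<^sup>2 * (\<Sum>i<length n. r i x * T i x)"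
      by (simp add: sum_distrib_left mult_ac)
    have TT: "(\<Sum>i<length n. r i x * Xf x0 p u0 r (m[i := 2 * int (n ! i) - 2]) x) = (\<Sum>i<length n. r i x * T i x)"
      by (simp add: T_def)
    show "((\<lambda>t. p t * y' t) has_real_derivative
         real (2 * N + 1) * real (2 * N) * u0 x * (\<Sum>i<length n. r i x * Xf x0 p u0 r (m[i := 2 * int (n ! i) - 2]) x)
         - q x * (u0 x * X x)) (at x within ?I)"
    proof (rule DERIV_cong[OF deriv_transform_on[OF D x eq]])
      show "(0 - q x * u0 x) * X x + (c * g x) * (p x * u0' x) +
        c * (((\<Sum>i<length n. real (2 * N) * (r i x * (u0 x)\<^sup>2 * T i x)) * u0 x - S x * u0' x) / (u0 x * u0 x)) =
        real (2 * N + 1) * real (2 * N) * u0 x * (\<Sum>i<length n. r i x * Xf x0 p u0 r (m[i := 2 * int (n ! i) - 2]) x)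
         - q x * (u0 x * X x)"
        unfolding DS TT c_def g_def using pnz unz x by (simp add: field_simps power2_eq_square)
    qed
  qed
qed

end
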